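(* There is a polynomial $q$ such that for every $\mathsf{TL}[\Diamond^{-}]$ program $P$ with $L(P)\neq\emptyset$ there exists a string $w\in L(P)$ with $|w|\le q(|P|)$, where $|P|$ is the size of $P$.
   Context: $\mathsf{TL}[\Diamond^{-}]$ formulas over a finite alphabet $\Sigma$: $\phi ::= \sigma \mid \neg\phi \mid \phi_1\wedge\phi_2 \mid \Diamond^{-}\phi \mid \Box^{-}\phi$ with $\sigma\in\Sigma$. At position $i$ of $w$: $w,i\models\sigma$ iff $w_i=\sigma$; Boolean connectives as usual; $w,i\models\Diamond^{-}\phi$ iff $w,j\models\phi$ for some $j<i$; $w,i\models\Box^{-}\phi$ iff $w,j\models\phi$ for all $j\le i$. $w\models\phi$ iff $w,|w|\models\phi$, and $L(\phi)=\{w:w\models\phi\}$. A program is a straight-line (DAG) representation $(\phi_1,\dots,\phi_m)$ where $\phi_i$ may refer to earlier $\phi_j$, denoting $\phi_m$; its size is the total number of symbols, each reference to an earlier line counting as 1. *)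

theory Defs
  imports Main "HOL-Computational_Algebra.Polynomial"
begin

datatype 'a tl = TSym 'a | TNeg "'a tl" | TAnd "'a tl" "'a tl" | TDia "'a tl" | TBox "'a tl"

text \<open>Positions are 1-based: position i of w is letter w ! (i - 1), 1 <= i <= length w.\<close>
fun sat :: "'a list \<Rightarrow> nat \<Rightarrow> 'a tl \<Rightarrow> bool" where
  "sat w i (TSym a) = (w ! (i - 1) = a)"
| "sat w i (TNeg f) = (\<not> sat w i f)"
| "sat w i (TAnd f g) = (sat w i f \<and> sat w i g)"
| "sat w i (TDia f) = (\<exists>j. 1 \<le> j \<and> j < i \<and> sat w j f)"
| "sat w i (TBox f) = (\<forall>j. 1 \<le> j \<and> j \<le> i \<longrightarrow> sat w j f)"

definition lang :: "'a tl \<Rightarrow> 'a list set" where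
  "lang f = {w. w \<noteq> [] \<and> sat w (length w) f}"

text \<open>Program lines: formulas that may refer (by 0-based index) to earlier lines.\<close>
datatype 'a pform = PSym 'a | PNeg "'a pform" | PAnd "'a pform" "'a pform"
  | PDia "'a pform" | PBox "'a pform" | PRef nat

fun refs :: "'a pform \<Rightarrow> nat set" where
  "refs (PSym a) = {}"
| "refs (PNeg f) = refs f"
| "refs (PAnd f g) = refs f \<union> refs g"
| "refs (PDia f) = refs f"
| "refs (PBox f) = refs f"
| "refs (PRef j) = {j}"

definition wf_prog :: "'a pform list \<Rightarrow> bool" where
  "wf_prog P \<longleftrightarrow> P \<noteq> [] \<and> (\<forall>i < length P. \<forall>j \<in> refs (P ! i). j < i)"

fun subst :: "'a tl list \<Rightarrow> 'a pform \<Rightarrow> 'a tl" where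
  "subst E (PSym a) = TSym a"
| "subst E (PNeg f) = TNeg (subst E f)"
| "subst E (PAnd f g) = TAnd (subst E f) (subst E g)"
| "subst E (PDia f) = TDia (subst E f)"
| "subst E (PBox f) = TBox (subst E f)"
| "subst E (PRef j) = E ! j"

definition expansions :: "'a pform list \<Rightarrow> 'a tl list" where
  "expansions P = foldl (\<lambda>E f. E @ [subst E f]) [] P"

definition denot :: "'a pform list \<Rightarrow> 'a tl" where
  "denot P = last (expansions P)"

definition lang_prog :: "'a pform list \<Rightarrow> 'a list set" where
  "lang_prog P = lang (denot P)"

fun psize :: "'a pform \<Rightarrow> nat" where
  "psize (PSym a) = 1"
| "psize (PNeg f) = 1 + psize f"
| "psize (PAnd f g) = 1 + psize f + psize g"
| "psize (PDia f) = 1 + psize f"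
| "psize (PBox f) = 1 + psize f"
| "psize (PRef j) = 1"

definition prog_size :: "'a pform list \<Rightarrow> nat" where
  "prog_size P = sum_list (map psize P)"

end

theory Submission
  imports Defs
begin

fun subf :: "'a tl \<Rightarrow> 'a tl set" where
  "subf (TSym a) = {TSym a}"
| "subf (TNeg f) = insert (TNeg f) (subf f)"
| "subf (TAnd f g) = insert (TAnd f g) (subf f \<union> subf g)"
| "subf (TDia f) = insert (TDia f) (subf f)"
| "subf (TBox f) = insert (TBox f) (subf f)"

lemma finite_subf[simp]: "finite (subf f)" by (induction f) auto
lemma self_subf[simp]: "f \<in> subf f" by (cases f) auto
lemma subf_trans: "g \<in> subf f \<Longrightarrow> subf g \<subseteq> subf f" by (induction f) auto

fun psubs :: "'a pform \<Rightarrow> 'a pform set" where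
  "psubs (PSym a) = {PSym a}"
| "psubs (PNeg f) = insert (PNeg f) (psubs f)"
| "psubs (PAnd f g) = insert (PAnd f g) (psubs f \<union> psubs g)"
| "psubs (PDia f) = insert (PDia f) (psubs f)"
| "psubs (PBox f) = insert (PBox f) (psubs f)"
| "psubs (PRef j) = {PRef j}"

lemma finite_psubs[simp]: "finite (psubs f)" by (induction f) auto

lemma card_psubs: "card (psubs f) \<le> psize f"
proof (induction f)
  case (PAnd f g)
  have "card (psubs (PAnd f g)) \<le> Suc (card (psubs f \<union> psubs g))"
    by (simp add: card_insert_if)
  also have "\<dots> \<le> Suc (card (psubs f) + card (psubs g))" using card_Un_le by auto
  finally show ?case using PAnd by simp
qed (auto simp: card_insert_if)

lemma subf_subst: "subf (subst E f) \<subseteq> subst E ` psubs f \<union> (\<Union>j\<in>refs f. subf (E!j))"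
  by (induction f) auto

lemma expansions_snoc: "expansions (P@[f]) = expansions P @ [subst (expansions P) f]"
  by (simp add: expansions_def)

lemma length_expansions: "length (expansions P) = length P"
  by (induction P rule: rev_induct) (simp_all add: expansions_snoc, simp add: expansions_def)

lemma card_U: "\<forall>i<length P. \<forall>j\<in>refs (P!i). j<i \<Longrightarrow>
   card (\<Union>(subf ` set (expansions P))) \<le> prog_size P"
proof (induction P rule: rev_induct)
  case Nil then show ?case by (simp add: expansions_def)
next
  case (snoc f P)
  let ?E = "expansions P"
  have h1: "\<forall>i<length P. \<forall>j\<in>refs (P!i). j<i"
  proof (intro allI impI ballI)
    fix i j assume "i<length P" "j\<in>refs(P!i)" then show "j<i"
      using snoc.prems[rule_format, of i j] by (simp add: nth_append)
  qed
  have h2: "\<forall>j\<in>refs f. j < length ?E"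
    using snoc.prems[rule_format, of "length P"] by (simp add: length_expansions)
  have sub: "\<Union>(subf ` set (expansions (P@[f]))) \<subseteq> \<Union>(subf ` set ?E) \<union> subst ?E ` psubs f"
  proof -
    have "subf (subst ?E f) \<subseteq> \<Union>(subf ` set ?E) \<union> subst ?E ` psubs f"
      using subf_subst[of ?E f] h2 by fastforce
    then show ?thesis by (auto simp: expansions_snoc)
  qed
  have "card (\<Union>(subf ` set (expansions (P@[f])))) \<le> card (\<Union>(subf ` set ?E) \<union> subst ?E ` psubs f)"
    by (rule card_mono) (use sub in auto)
  also have "\<dots> \<le> card (\<Union>(subf ` set ?E)) + card (subst ?E ` psubs f)" by (rule card_Un_le)
  also have "\<dots> \<le> prog_size P + psize f"
    using snoc.IH[OF h1] card_image_le[of "psubs f" "subst ?E"] card_psubs[of f] by simp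
  finally show ?case by (simp add: prog_size_def)
qed

lemma card_subf_denot: "wf_prog P \<Longrightarrow> card (subf (denot P)) \<le> prog_size P"
proof -
  assume wf: "wf_prog P"
  hence ne: "expansions P \<noteq> []" using length_expansions[of P] by (auto simp: wf_prog_def)
  hence "denot P \<in> set (expansions P)" by (simp add: denot_def)
  hence "subf (denot P) \<subseteq> \<Union>(subf ` set (expansions P))" by auto
  hence "card (subf (denot P)) \<le> card (\<Union>(subf ` set (expansions P)))"
    by (intro card_mono) auto
  also have "\<dots> \<le> prog_size P" using wf card_U by (auto simp: wf_prog_def)
  finally show ?thesis .
qed

fun isDia :: "'a tl \<Rightarrow> bool" where "isDia (TDia f) = True" | "isDia _ = False"
fun isBox :: "'a tl \<Rightarrow> bool" where "isBox (TBox f) = True" | "isBox _ = False"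

definition Dset :: "'a tl set \<Rightarrow> 'a list \<Rightarrow> nat \<Rightarrow> 'a tl set" where
  "Dset S w i = {\<psi>\<in>S. isDia \<psi> \<and> sat w i \<psi>}"
definition Bset :: "'a tl set \<Rightarrow> 'a list \<Rightarrow> nat \<Rightarrow> 'a tl set" where
  "Bset S w i = {\<psi>\<in>S. isBox \<psi> \<and> \<not> sat w i \<psi>}"

lemma Dset_mono: "i \<le> k \<Longrightarrow> Dset S w i \<subseteq> Dset S w k"
  proof
  fix x assume k: "i \<le> k" and x: "x \<in> Dset S w i"
  then obtain f where f: "x = TDia f" by (auto simp: Dset_def elim: isDia.elims)
  from x f obtain j where "1 \<le> j" "j < i" "sat w j f" by (auto simp: Dset_def)
  with k x f show "x \<in> Dset S w k" by (auto simp: Dset_def)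
qed

lemma Bset_mono: "i \<le> k \<Longrightarrow> Bset S w i \<subseteq> Bset S w k"
  proof
  fix x assume k: "i \<le> k" and x: "x \<in> Bset S w i"
  then obtain f where f: "x = TBox f" by (auto simp: Bset_def elim: isBox.elims)
  from x f obtain j where "1 \<le> j" "j \<le> i" "\<not> sat w j f" by (auto simp: Bset_def)
  with k x f show "x \<in> Bset S w k" by (auto simp: Bset_def)
qed

lemma same_type_sat:
  assumes "w!(a-1) = w!(b-1)" "Dset S w a = Dset S w b" "Bset S w a = Bset S w b"
    and "subf \<psi> \<subseteq> S"
  shows "sat w a \<psi> = sat w b \<psi>"
  using assms(4)
proof (induction \<psi>)
  case (TDia f)
  have "TDia f \<in> S" using TDia.prems by simp
  moreover have "TDia f \<in> Dset S w a \<longleftrightarrow> TDia f \<in> Dset S w b" using assms(2) by simp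
  ultimately show ?case unfolding Dset_def by simp
next
  case (TBox f)
  have "TBox f \<in> S" using TBox.prems by simp
  moreover have "TBox f \<in> Bset S w a \<longleftrightarrow> TBox f \<in> Bset S w b" using assms(3) by simp
  ultimately show ?case unfolding Bset_def by auto
qed (use assms(1) in auto)

definition sh :: "nat \<Rightarrow> nat \<Rightarrow> nat" where "sh j i = (if i < j then i else i - 1)"
definition del :: "nat \<Rightarrow> 'a list \<Rightarrow> 'a list" where "del j w = take (j-1) w @ drop j w"

lemma length_del: "1 \<le> j \<Longrightarrow> j \<le> length w \<Longrightarrow> length (del j w) = length w - 1"
  by (simp add: del_def)

lemma del_nth: "1 \<le> i \<Longrightarrow> i \<le> length w \<Longrightarrow> i \<noteq> j \<Longrightarrow> j \<le> length w \<Longrightarrow> 1 \<le> j \<Longrightarrow>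
   del j w ! (sh j i - 1) = w!(i-1)"
  by (auto simp: del_def sh_def nth_append min_def)

lemma delete_sat:
  assumes "1 \<le> j'" "j' < j" "j < length w"
    and H: "\<forall>\<chi>\<in>subf \<psi>. sat w j \<chi> = sat w j' \<chi>"
  shows "1 \<le> i \<Longrightarrow> i \<le> length w \<Longrightarrow> i \<noteq> j \<Longrightarrow> sat (del j w) (sh j i) \<psi> = sat w i \<psi>"
  using H
proof (induction \<psi> arbitrary: i)
  case (TSym x)
  then show ?case using del_nth[of i w j] assms by simp
next
  case (TNeg f) then show ?case by simp
next
  case (TAnd f g) then show ?case by simp
next
  case (TDia f)
  have IH: "\<And>m. 1\<le>m \<Longrightarrow> m \<le> length w \<Longrightarrow> m\<noteq>j \<Longrightarrow> sat (del j w) (sh j m) f = sat w m f"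
    using TDia.IH TDia.prems by auto
  have Hf: "sat w j f = sat w j' f" using TDia.prems by simp
  show ?case
  proof
    assume "sat (del j w) (sh j i) (TDia f)"
    then obtain m where m: "1\<le>m" "m < sh j i" "sat (del j w) m f" by auto
    define m' where "m' = (if m < j then m else m+1)"
    have "sh j m' = m" "m' \<noteq> j" "1 \<le> m'" "m' \<le> length w" "m' < i"
      using m TDia.prems assms by (auto simp: m'_def sh_def split: if_splits)
    then show "sat w i (TDia f)" using IH[of m'] m by auto
  next
    assume "sat w i (TDia f)"
    then obtain m where m: "1\<le>m" "m<i" "sat w m f" by auto
    obtain m'' where m'': "1\<le>m''" "m''<i" "m''\<noteq>j" "sat w m'' f"
    proof (cases "m = j")
      case True then show ?thesis using that[of j'] m Hf assms by auto
    next
      case False then show ?thesis using that[of m] m by auto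
    qed
    have "1 \<le> sh j m''" "sh j m'' < sh j i"
      using m'' TDia.prems assms by (auto simp: sh_def)
    then show "sat (del j w) (sh j i) (TDia f)" using IH[of m''] m'' TDia.prems by auto
  qed
next
  case (TBox f)
  have IH: "\<And>m. 1\<le>m \<Longrightarrow> m \<le> length w \<Longrightarrow> m\<noteq>j \<Longrightarrow> sat (del j w) (sh j m) f = sat w m f"
    using TBox.IH TBox.prems by auto
  have Hf: "sat w j f = sat w j' f" using TBox.prems by simp
  show ?case
  proof
    assume A: "sat (del j w) (sh j i) (TBox f)"
    have B: "sat w m f" if "1 \<le> m" "m \<le> i" "m \<noteq> j" for m
    proof -
      have "1 \<le> sh j m" "sh j m \<le> sh j i" using that TBox.prems assms by (auto simp: sh_def)
      then show ?thesis using A IH[of m] that TBox.prems by auto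
    qed
    show "sat w i (TBox f)"
    proof (unfold sat.simps, intro allI impI)
      fix m assume "1 \<le> m \<and> m \<le> i"
      then show "sat w m f" using B[of m] B[of j'] Hf assms by (cases "m = j") auto
    qed
  next
    assume A: "sat w i (TBox f)"
    show "sat (del j w) (sh j i) (TBox f)"
    proof (unfold sat.simps, intro allI impI, elim conjE)
      fix m assume m: "1 \<le> m" "m \<le> sh j i"
      define m' where "m' = (if m < j then m else m+1)"
      have "sh j m' = m" "m' \<noteq> j" "1 \<le> m'" "m' \<le> length w" "m' \<le> i"
        using m TBox.prems assms by (auto simp: m'_def sh_def split: if_splits)
      then show "sat (del j w) m f" using IH[of m'] A by auto
    qed
  qed
qed

lemma card_types:
  fixes w :: "('a::finite) list" and S :: "'a tl set" and I :: "nat set"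
  assumes finS: "finite S" and finI: "finite I"
  shows "card ((\<lambda>i. (w!(i-1), Dset S w i, Bset S w i)) ` I) \<le> card (UNIV :: 'a set) * (card S + 1)"
proof -
  let ?D = "Dset S w" and ?B = "Bset S w"
  define c where "c i = card (?D i) + card (?B i)" for i
  have finD: "finite (?D i)" "finite (?B i)" for i using finS by (auto simp: Dset_def Bset_def)
  have cle: "c i \<le> card S" for i
  proof -
    have nb: "\<not> (isDia x \<and> isBox x)" for x :: "'a tl" by (cases x) auto
    have disj: "?D i \<inter> ?B i = {}" using nb by (auto simp: Dset_def Bset_def)
    have "c i = card (?D i \<union> ?B i)" using card_Un_disjoint[OF finD(1) finD(2) disj] by (simp add: c_def)
    also have "\<dots> \<le> card S" by (rule card_mono[OF finS]) (auto simp: Dset_def Bset_def)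
    finally show ?thesis .
  qed
  have ceq1: "(?D a, ?B a) = (?D b, ?B b)" if "a \<le> b" "c a = c b" for a b
  proof -
    have s1: "?D a \<subseteq> ?D b" "?B a \<subseteq> ?B b"
      by (rule Dset_mono[OF that(1)], rule Bset_mono[OF that(1)])
    have "card (?D a) \<le> card (?D b)" "card (?B a) \<le> card (?B b)"
      using s1 finD by (auto intro: card_mono)
    hence "card (?D a) = card (?D b)" "card (?B a) = card (?B b)" using that by (auto simp: c_def)
    thus ?thesis using s1 finD card_subset_eq by metis
  qed
  have ceq: "(?D a, ?B a) = (?D b, ?B b)" if "c a = c b" for a b
  proof (cases "a \<le> b")
    case True show ?thesis using ceq1[OF True that] .
  next
    case False then have "b \<le> a" by simp
    from ceq1[OF this that[symmetric]] show ?thesis by simp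
  qed
  define V where "V = (\<lambda>i. (?D i, ?B i)) ` I"
  define F where "F x = card (fst x) + card (snd x)" for x :: "'a tl set \<times> 'a tl set"
  have inj: "inj_on F V"
  proof (rule inj_onI)
    fix x y assume "x \<in> V" "y \<in> V" "F x = F y"
    then obtain a b where xy: "x = (?D a, ?B a)" "y = (?D b, ?B b)" and cab: "c a = c b"
      by (auto simp: V_def F_def c_def)
    show "x = y" unfolding xy by (rule ceq[OF cab])
  qed
  have FV: "F ` V = c ` I" unfolding V_def image_image F_def c_def by simp
  have "card V = card (c ` I)" using card_image[OF inj] FV by simp
  also have "\<dots> \<le> card {0..card S}" by (rule card_mono) (use cle in auto)
  finally have cV: "card V \<le> card S + 1" by simp
  have "(\<lambda>i. (w!(i-1), ?D i, ?B i)) ` I \<subseteq> UNIV \<times> V" by (auto simp: V_def)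
  hence "card ((\<lambda>i. (w!(i-1), ?D i, ?B i)) ` I) \<le> card ((UNIV::'a set) \<times> V)"
    by (rule card_mono[rotated]) (simp add: V_def finI)
  also have "\<dots> = card (UNIV :: 'a set) * card V" by (simp add: card_cartesian_product)
  also have "\<dots> \<le> card (UNIV :: 'a set) * (card S + 1)" using cV by (rule mult_le_mono2)
  finally show ?thesis .
qed

lemma short_word:
  fixes \<phi> :: "('a::finite) tl"
  shows "w \<in> lang \<phi> \<Longrightarrow> \<exists>w'\<in>lang \<phi>. length w' \<le> card (UNIV :: 'a set) * (card (subf \<phi>) + 1) + 1"
proof (induction "length w" arbitrary: w rule: less_induct)
  case less
  let ?S = "subf \<phi>" let ?n = "length w" let ?K = "card (UNIV :: 'a set) * (card ?S + 1)"
  show ?case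
  proof (cases "?n \<le> ?K + 1")
    case True with less.prems show ?thesis by blast
  next
    case False
    define t where "t i = (w!(i-1), Dset ?S w i, Bset ?S w i)" for i
    define I where "I = {1..<?n}"
    have cardI: "card I = ?n - 1" by (simp add: I_def)
    have ctI: "card (t ` I) \<le> ?K" unfolding t_def by (rule card_types) (auto simp: I_def)
    have "\<not> inj_on t I"
    proof
      assume "inj_on t I"
      then have "card (t ` I) = card I" by (rule card_image)
      with ctI cardI False show False by linarith
    qed
    then obtain a b where ab: "a\<in>I" "b\<in>I" "a\<noteq>b" "t a = t b" by (auto simp: inj_on_def)
    define j' where "j' = min a b"
    define j where "j = max a b"
    have tj: "t j' = t j" using ab by (auto simp: j'_def j_def min_def max_def)
    have jj: "1 \<le> j'" "j' < j" "j < ?n" using ab by (auto simp: I_def j'_def j_def)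
    have H: "\<forall>\<chi>\<in>?S. sat w j \<chi> = sat w j' \<chi>"
    proof
      fix \<chi> assume "\<chi> \<in> ?S"
      hence "subf \<chi> \<subseteq> ?S" by (rule subf_trans)
      then show "sat w j \<chi> = sat w j' \<chi>"
        using same_type_sat[of w j j' ?S \<chi>] tj by (simp add: t_def)
    qed
    have len: "length (del j w) = ?n - 1" using jj by (simp add: length_del)
    have "sat (del j w) (sh j ?n) \<phi> = sat w ?n \<phi>"
      by (rule delete_sat[OF jj]) (use H jj in auto)
    moreover have "sh j ?n = ?n - 1" using jj by (simp add: sh_def)
    moreover have "length (del j w) \<noteq> 0" using len jj by linarith
    hence "del j w \<noteq> []" by blast
    ultimately have "del j w \<in> lang \<phi>" using less.prems len jj by (simp add: lang_def)
    moreover have "length (del j w) < ?n" using len jj by simp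
    ultimately show ?thesis using less.hyps by blast
  qed
qed

theorem lemma4p5:
  "\<exists>q :: real poly. \<forall>P :: ('a::finite) pform list.
     wf_prog P \<and> lang_prog P \<noteq> {} \<longrightarrow>
     (\<exists>w \<in> lang_prog P. real (length w) \<le> poly q (real (prog_size P)))"
proof (intro exI[of _ "[:of_nat (card (UNIV :: 'a set)) + 1, of_nat (card (UNIV :: 'a set)):]"] allI impI)
  fix P :: "'a pform list"
  assume A: "wf_prog P \<and> lang_prog P \<noteq> {}"
  then obtain w where w: "w \<in> lang (denot P)" by (auto simp: lang_prog_def)
  obtain w' where w': "w' \<in> lang (denot P)"
    "length w' \<le> card (UNIV :: 'a set) * (card (subf (denot P)) + 1) + 1"
    using short_word[OF w] by blast
  have cs: "card (subf (denot P)) \<le> prog_size P" using card_subf_denot[of P] A by blast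
  have "card (UNIV :: 'a set) * (card (subf (denot P)) + 1) \<le> card (UNIV :: 'a set) * (prog_size P + 1)"
    by (rule mult_le_mono2) (use cs in simp)
  hence "length w' \<le> card (UNIV :: 'a set) * (prog_size P + 1) + 1"
    using w'(2) by linarith
  hence "real (length w') \<le> real (card (UNIV :: 'a set) * (prog_size P + 1) + 1)" by linarith
  also have "\<dots> = poly [:of_nat (card (UNIV :: 'a set)) + 1, of_nat (card (UNIV :: 'a set)):] (real (prog_size P))"
    by (simp add: algebra_simps)
  finally show "\<exists>w \<in> lang_prog P. real (length w) \<le> poly [:of_nat (card (UNIV :: 'a set)) + 1, of_nat (card (UNIV :: 'a set)):] (real (prog_size P))"
    using w'(1) by (auto simp: lang_prog_def)
qed

end
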